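(* For every digraph $X$, $\lambda_1(X)\le \rho(X)\le 3\lambda_1(X)$. Both inequalities are tight, i.e., each holds with equality for some digraph with at least one arc.
   Context: A digraph $X$ has a finite vertex set $V(X)$ and an arc set $E(X)$ of ordered pairs of distinct vertices; $\{x,y\}$ is a digon if both $xy$ and $yx$ are arcs. The Hermitian adjacency matrix $H(X)$ has $(u,v)$-entry $1$ if $uv$ and $vu$ are arcs, $i$ if $uv$ is an arc and $vu$ is not, $-i$ if $vu$ is an arc and $uv$ is not, and $0$ otherwise. $H(X)$ is Hermitian, so its eigenvalues are real; $\lambda_1(X)$ denotes the largest eigenvalue of $H(X)$ and $\rho(X)$ the maximum absolute value of an eigenvalue of $H(X)$. *)

theory Defs
  imports "Jordan_Normal_Form.Char_Poly"
begin

definition digraph :: "nat \<Rightarrow> (nat \<times> nat) set \<Rightarrow> bool" where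
  "digraph n E \<longleftrightarrow> E \<subseteq> {0..<n} \<times> {0..<n} \<and> (\<forall>x. (x, x) \<notin> E)"

definition herm_adj :: "nat \<Rightarrow> (nat \<times> nat) set \<Rightarrow> complex mat" where
  "herm_adj n E = mat n n (\<lambda>(u, v).
      if (u, v) \<in> E \<and> (v, u) \<in> E then 1
      else if (u, v) \<in> E then \<i>
      else if (v, u) \<in> E then - \<i>
      else 0)"

text \<open>Largest eigenvalue of H(X) (eigenvalues of a Hermitian matrix are real).\<close>
definition lambda1 :: "nat \<Rightarrow> (nat \<times> nat) set \<Rightarrow> real" where
  "lambda1 n E = Max {x :: real. eigenvalue (herm_adj n E) (complex_of_real x)}"

definition rho :: "nat \<Rightarrow> (nat \<times> nat) set \<Rightarrow> real" where
  "rho n E = Max {\<bar>x\<bar> | x :: real. eigenvalue (herm_adj n E) (complex_of_real x)}"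

end

theory Submission
  imports Defs
begin

definition hv :: "nat \<Rightarrow> (nat \<Rightarrow> nat \<Rightarrow> complex) \<Rightarrow> (nat \<Rightarrow> complex) \<Rightarrow> nat \<Rightarrow> complex" where
  "hv n h w i = (\<Sum>j<n. h i j * w j)"
definition bf :: "nat \<Rightarrow> (nat \<Rightarrow> nat \<Rightarrow> complex) \<Rightarrow> (nat \<Rightarrow> complex) \<Rightarrow> (nat \<Rightarrow> complex) \<Rightarrow> complex" where
  "bf n h u v = (\<Sum>i<n. \<Sum>j<n. cnj (u i) * h i j * v j)"
definition nn :: "nat \<Rightarrow> (nat \<Rightarrow> complex) \<Rightarrow> real" where
  "nn n w = (\<Sum>i<n. (cmod (w i))^2)"
definition herm :: "nat \<Rightarrow> (nat \<Rightarrow> nat \<Rightarrow> complex) \<Rightarrow> bool" where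
  "herm n h \<longleftrightarrow> (\<forall>i<n. \<forall>j<n. h j i = cnj (h i j))"

lemma bf_hv: "bf n h u v = (\<Sum>i<n. cnj (u i) * hv n h v i)"
  unfolding bf_def hv_def by (simp add: sum_distrib_left mult.assoc)

lemma bf_sym: assumes "herm n h" shows "bf n h v u = cnj (bf n h u v)"
proof -
  have "cnj (bf n h u v) = (\<Sum>i<n. \<Sum>j<n. u i * cnj (h i j) * cnj (v j))"
    unfolding bf_def by simp
  also have "\<dots> = (\<Sum>i<n. \<Sum>j<n. cnj (v j) * h j i * u i)"
  proof (intro sum.cong refl)
    fix i j assume "i \<in> {..<n}" "j \<in> {..<n}"
    hence "i < n" "j < n" by auto
    hence "h j i = cnj (h i j)" using assms unfolding herm_def by blast
    thus "u i * cnj (h i j) * cnj (v j) = cnj (v j) * h j i * u i" by simp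
  qed
  also have "\<dots> = bf n h v u" unfolding bf_def by (rule sum.swap)
  finally show ?thesis by simp
qed

lemma bf_real: assumes "herm n h" shows "complex_of_real (Re (bf n h u u)) = bf n h u u"
proof -
  have "bf n h u u = cnj (bf n h u u)" by (rule bf_sym[OF assms])
  hence "Im (bf n h u u) = Im (cnj (bf n h u u))" by (rule arg_cong)
  hence "Im (bf n h u u) = - Im (bf n h u u)" by simp
  hence "Im (bf n h u u) = 0" by simp
  thus ?thesis by (simp add: complex_eq_iff)
qed

lemma bf_add: "bf n h (\<lambda>i. u i + s * v i) (\<lambda>i. u i + s * v i)
   = bf n h u u + s * bf n h u v + cnj s * bf n h v u + (cnj s * s) * bf n h v v"
proof -
  have t: "cnj (u i + s * v i) * h i j * (u j + s * v j)
     = cnj (u i) * h i j * u j + s * (cnj (u i) * h i j * v j) + cnj s * (cnj (v i) * h i j * u j)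
       + (cnj s * s) * (cnj (v i) * h i j * v j)" for i j
    by (simp add: algebra_simps)
  show ?thesis unfolding bf_def t
    by (simp only: sum.distrib sum_distrib_left[symmetric])
qed

lemma bf_scale: "bf n h (\<lambda>i. c * w i) (\<lambda>i. c * w i) = (cnj c * c) * bf n h w w"
proof -
  have t: "cnj (c * w i) * h i j * (c * w j) = (cnj c * c) * (cnj (w i) * h i j * w j)" for i j
    by (simp add: algebra_simps)
  show ?thesis unfolding bf_def t by (simp only: sum_distrib_left)
qed

lemma nn_scale: "nn n (\<lambda>i. c * w i) = (cmod c)^2 * nn n w"
  unfolding nn_def by (simp add: sum_distrib_left norm_mult power_mult_distrib)

lemma nn_nonneg: "0 \<le> nn n w" unfolding nn_def by (simp add: sum_nonneg)

lemma nn_zero: assumes "nn n w = 0" "i < n" shows "w i = 0"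
proof -
  have "\<forall>i\<in>{..<n}. (cmod (w i))^2 = 0"
    using assms(1) unfolding nn_def by (subst sum_nonneg_eq_0_iff[symmetric]) auto
  thus ?thesis using assms(2) by simp
qed

lemma le_nn: assumes "i < n" shows "(cmod (w i))^2 \<le> nn n w"
  unfolding nn_def using assms by (intro member_le_sum) auto

lemma prod_le_nn: assumes "i < n" "j < n" shows "cmod (w i) * cmod (w j) \<le> nn n w"
proof -
  have a: "(cmod (w i))^2 \<le> nn n w" "(cmod (w j))^2 \<le> nn n w" using le_nn assms by auto
  have "cmod (w i) * cmod (w j) \<le> ((cmod (w i))^2 + (cmod (w j))^2) / 2"
    using sum_squares_bound[of "cmod (w i)" "cmod (w j)"] by (simp add: power2_eq_square)
  also have "\<dots> \<le> nn n w" using a by simp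
  finally show ?thesis .
qed

lemma bf_bound: "cmod (bf n h u u) \<le> (\<Sum>i<n. \<Sum>j<n. cmod (h i j)) * nn n u"
proof -
  have "cmod (bf n h u u) \<le> (\<Sum>i<n. \<Sum>j<n. cmod (cnj (u i) * h i j * u j))"
    unfolding bf_def by (rule order_trans[OF norm_sum sum_mono]) (rule norm_sum)
  also have "\<dots> \<le> (\<Sum>i<n. \<Sum>j<n. cmod (h i j) * nn n u)"
  proof (intro sum_mono)
    fix i j assume "i \<in> {..<n}" "j \<in> {..<n}"
    hence "cmod (u i) * cmod (u j) \<le> nn n u" by (intro prod_le_nn) auto
    hence "cmod (h i j) * (cmod (u i) * cmod (u j)) \<le> cmod (h i j) * nn n u"
      by (intro mult_left_mono) auto
    thus "cmod (cnj (u i) * h i j * u j) \<le> cmod (h i j) * nn n u"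
      by (simp add: norm_mult algebra_simps)
  qed
  also have "\<dots> = (\<Sum>i<n. \<Sum>j<n. cmod (h i j)) * nn n u"
    by (simp only: sum_distrib_right)
  finally show ?thesis .
qed

lemma cnj_mult_self: "cnj z * z = complex_of_real ((cmod z)^2)"
  by (metis complex_norm_square mult.commute of_real_power)

lemma bf_cs: assumes h: "herm n g" and psd: "\<And>w. 0 \<le> Re (bf n g w w)"
  shows "(cmod (bf n g u v))^2 \<le> Re (bf n g u u) * Re (bf n g v v)"
proof -
  define a where "a = Re (bf n g u u)"
  define c where "c = Re (bf n g v v)"
  define b where "b = bf n g u v"
  have a0: "0 \<le> a" and c0: "0 \<le> c" unfolding a_def c_def using psd by auto
  have key: "0 \<le> a - 2*t*(cmod b)^2 + t^2 * (cmod b)^2 * c" for t :: real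
  proof -
    define s where "s = - complex_of_real t * cnj b"
    have e1: "bf n g u u = complex_of_real a" unfolding a_def using bf_real[OF h] by simp
    have e2: "bf n g v v = complex_of_real c" unfolding c_def using bf_real[OF h] by simp
    have e3: "bf n g v u = cnj b" unfolding b_def by (rule bf_sym[OF h])
    have "bf n g (\<lambda>i. u i + s * v i) (\<lambda>i. u i + s * v i)
        = complex_of_real a + s * b + cnj s * cnj b + (cnj s * s) * complex_of_real c"
      using bf_add[of n g u s v] e1 e2 e3 b_def by simp
    also have "\<dots> = complex_of_real (a - 2*t*(cmod b)^2 + t^2 * (cmod b)^2 * c)"
    proof -
      have bb: "cnj b * b = complex_of_real ((cmod b)^2)" by (rule cnj_mult_self)
      have "s * b = - complex_of_real t * (cnj b * b)" unfolding s_def by (simp add: algebra_simps)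
      moreover have "cnj s * cnj b = - complex_of_real t * (cnj b * b)" unfolding s_def by (simp add: algebra_simps)
      moreover have "cnj s * s = complex_of_real (t^2) * (cnj b * b)" unfolding s_def
        by (simp add: algebra_simps power2_eq_square)
      ultimately show ?thesis unfolding bb by (simp add: algebra_simps)
    qed
    finally have "Re (bf n g (\<lambda>i. u i + s * v i) (\<lambda>i. u i + s * v i)) = a - 2*t*(cmod b)^2 + t^2 * (cmod b)^2 * c"
      by simp
    thus ?thesis using psd by metis
  qed
  have "(cmod b)^2 \<le> a * c"
  proof (cases "c = 0")
    case True
    show ?thesis
    proof (rule ccontr)
      assume "\<not> ?thesis"
      hence pos: "0 < (cmod b)^2" using True by simp
      have "0 \<le> a - 2*((a+1)/(2*(cmod b)^2))*(cmod b)^2" using key[of "(a+1)/(2*(cmod b)^2)"] True by simp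
      also have "\<dots> = -1" using pos by (simp add: field_simps)
      finally show False by simp
    qed
  next
    case False
    hence cp: "0 < c" using c0 by simp
    have "0 \<le> a - 2*(1/c)*(cmod b)^2 + (1/c)^2 * (cmod b)^2 * c" using key[of "1/c"] .
    also have "\<dots> = a - (cmod b)^2 / c" using cp by (simp add: field_simps power2_eq_square)
    finally have "(cmod b)^2 / c \<le> a" by simp
    thus ?thesis using cp by (simp add: field_simps mult.commute)
  qed
  thus ?thesis unfolding a_def b_def c_def .
qed

lemma hv_shift: assumes "i < n"
  shows "hv n (\<lambda>i j. (if i = j then c else 0) - h i j) v i = c * v i - hv n h v i"
proof -
  have t: "((if i = j then c else 0) - h i j) * v j = (if i = j then c * v j else 0) - h i j * v j" for j
    by (simp add: left_diff_distrib)
  have "hv n (\<lambda>i j. (if i = j then c else 0) - h i j) v i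
      = (\<Sum>j<n. (if i = j then c * v j else 0)) - hv n h v i"
    unfolding hv_def t by (simp only: sum_subtractf)
  also have "(\<Sum>j<n. (if i = j then c * v j else 0)) = c * v i"
    using assms by (simp add: sum.delta)
  finally show ?thesis .
qed

lemma sum_cnj_self: "(\<Sum>i<n. cnj (w i) * w i) = complex_of_real (nn n w)"
  unfolding nn_def by (simp add: cnj_mult_self)

lemma bf_shift:
  "bf n (\<lambda>i j. (if i = j then c else 0) - h i j) w w = c * complex_of_real (nn n w) - bf n h w w"
proof -
  have "bf n (\<lambda>i j. (if i = j then c else 0) - h i j) w w
     = (\<Sum>i<n. cnj (w i) * (c * w i - hv n h w i))"
    unfolding bf_hv by (intro sum.cong refl) (simp add: hv_shift)
  also have "\<dots> = c * (\<Sum>i<n. cnj (w i) * w i) - (\<Sum>i<n. cnj (w i) * hv n h w i)"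
    by (simp add: sum_subtractf sum_distrib_left algebra_simps)
  finally show ?thesis by (simp add: sum_cnj_self bf_hv)
qed

lemma herm_shift: assumes "herm n h"
  shows "herm n (\<lambda>i j. (if i = j then complex_of_real m else 0) - h i j)"
  unfolding herm_def
proof (intro allI impI)
  fix i j assume "i < n" "j < n"
  hence "h j i = cnj (h i j)" using assms unfolding herm_def by blast
  thus "(if j = i then complex_of_real m else 0) - h j i = cnj ((if i = j then complex_of_real m else 0) - h i j)"
    by auto
qed

lemma bf_hv_self: assumes "herm n g"
  shows "bf n g w (hv n g w) = complex_of_real (nn n (hv n g w))"
proof -
  have "bf n g w (hv n g w) = (\<Sum>j<n. (\<Sum>i<n. cnj (w i) * g i j) * hv n g w j)"
    unfolding bf_def by (subst sum.swap) (simp add: sum_distrib_right)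
  also have "\<dots> = (\<Sum>j<n. cnj (hv n g w j) * hv n g w j)"
  proof (intro sum.cong refl)
    fix j assume j: "j \<in> {..<n}"
    have "cnj (hv n g w j) = (\<Sum>i<n. cnj (g j i) * cnj (w i))" unfolding hv_def by simp
    also have "\<dots> = (\<Sum>i<n. cnj (w i) * g i j)"
    proof (intro sum.cong refl)
      fix i assume i: "i \<in> {..<n}"
      have "g i j = cnj (g j i)" using assms i j unfolding herm_def by blast
      thus "cnj (g j i) * cnj (w i) = cnj (w i) * g i j" by simp
    qed
    finally show "(\<Sum>i<n. cnj (w i) * g i j) * hv n g w j = cnj (hv n g w j) * hv n g w j" by simp
  qed
  finally show ?thesis by (simp add: sum_cnj_self)
qed

lemma mat_vec_hv: assumes "i < n"
  shows "(mat n n (\<lambda>(i,j). g i j) *\<^sub>v vec n f) $ i = hv n g f i"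
  using assms by (simp add: scalar_prod_def hv_def atLeast0LessThan)

lemma inv_bound:
  assumes inj: "\<And>f. (\<forall>i<n. hv n g f i = 0) \<Longrightarrow> (\<forall>i<n. f i = 0)"
  shows "\<exists>C\<ge>0. \<forall>f. nn n f \<le> C * nn n (hv n g f)"
proof -
  define G where "G = mat n n (\<lambda>(i,j). g i j)"
  have G: "G \<in> carrier_mat n n" unfolding G_def by simp
  have "det G \<noteq> 0"
  proof
    assume "det G = 0"
    then obtain v where v: "v \<in> carrier_vec n" "v \<noteq> 0\<^sub>v n" "G *\<^sub>v v = 0\<^sub>v n"
      using det_0_iff_vec_prod_zero[OF G] by auto
    have vv: "vec n (($) v) = v" using v(1) by auto
    have "\<forall>i<n. hv n g (($) v) i = 0"
    proof (intro allI impI)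
      fix i assume i: "i < n"
      have "hv n g (($) v) i = (G *\<^sub>v vec n (($) v)) $ i" unfolding G_def using mat_vec_hv[OF i] by simp
      also have "\<dots> = 0" using v(3) i vv by simp
      finally show "hv n g (($) v) i = 0" .
    qed
    hence "\<forall>i<n. v $ i = 0" using inj by blast
    hence "v = 0\<^sub>v n" using v(1) by (intro eq_vecI) auto
    thus False using v(2) by simp
  qed
  from det_non_zero_imp_unit[OF G this, unfolded Units_def, of "()"]
  obtain K where K: "K \<in> carrier_mat n n" and KG: "K * G = 1\<^sub>m n"
    by (auto simp: ring_mat_def)
  define C where "C = (\<Sum>i<n. (\<Sum>k<n. cmod (K $$ (i,k)))^2)"
  have "C \<ge> 0" unfolding C_def by (simp add: sum_nonneg)
  moreover have "nn n f \<le> C * nn n (hv n g f)" for f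
  proof -
    define z where "z = hv n g f"
    have Gv: "G *\<^sub>v vec n f = vec n z"
    proof (rule eq_vecI)
      fix i assume "i < dim_vec (vec n z)"
      hence i: "i < n" by simp
      show "(G *\<^sub>v vec n f) $ i = vec n z $ i"
        using mat_vec_hv[OF i, of g f] i unfolding G_def z_def by simp
    qed (simp add: G_def)
    have "K *\<^sub>v (G *\<^sub>v vec n f) = (K * G) *\<^sub>v vec n f"
      using K G by (simp add: assoc_mult_mat_vec)
    also have "\<dots> = vec n f" unfolding KG by simp
    finally have KZ: "K *\<^sub>v vec n z = vec n f" unfolding Gv .
    have zk: "cmod (z k) \<le> sqrt (nn n z)" if "k < n" for k
      using le_nn[OF that, of z] by (simp add: real_le_rsqrt)
    have fi: "(cmod (f i))^2 \<le> (\<Sum>k<n. cmod (K $$ (i,k)))^2 * nn n z" if i: "i < n" for i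
    proof -
      have "f i = (K *\<^sub>v vec n z) $ i" using KZ i by simp
      also have "\<dots> = (\<Sum>k<n. K $$ (i,k) * z k)"
        using K i by (simp add: scalar_prod_def atLeast0LessThan)
      finally have "cmod (f i) \<le> (\<Sum>k<n. cmod (K $$ (i,k)) * cmod (z k))"
        by (simp add: norm_mult[symmetric] norm_sum)
      also have "\<dots> \<le> (\<Sum>k<n. cmod (K $$ (i,k)) * sqrt (nn n z))"
        by (intro sum_mono mult_left_mono zk) auto
      also have "\<dots> = (\<Sum>k<n. cmod (K $$ (i,k))) * sqrt (nn n z)"
        by (simp add: sum_distrib_right)
      finally have "(cmod (f i))^2 \<le> ((\<Sum>k<n. cmod (K $$ (i,k))) * sqrt (nn n z))^2"
        by (intro power_mono) auto
      also have "\<dots> = (\<Sum>k<n. cmod (K $$ (i,k)))^2 * nn n z"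
        using nn_nonneg[of n z] by (simp add: power_mult_distrib)
      finally show ?thesis .
    qed
    have "nn n f \<le> (\<Sum>i<n. (\<Sum>k<n. cmod (K $$ (i,k)))^2 * nn n z)"
      unfolding nn_def[of n f] by (intro sum_mono fi) auto
    also have "\<dots> = C * nn n z" unfolding C_def by (simp add: sum_distrib_right)
    finally show ?thesis unfolding z_def .
  qed
  ultimately show ?thesis by blast
qed

lemma rayleigh:
  assumes h: "herm n h" and n: "1 \<le> n"
  shows "\<exists>m v. (\<exists>i<n. v i \<noteq> 0) \<and> (\<forall>i<n. hv n h v i = complex_of_real m * v i)
                \<and> (\<forall>w. Re (bf n h w w) \<le> m * nn n w)"
proof -
  define K where "K = (\<Sum>i<n. \<Sum>j<n. cmod (h i j))"
  define S where "S = {Re (bf n h w w) | w. nn n w = 1}"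
  define e0 :: "nat \<Rightarrow> complex" where "e0 = (\<lambda>i. if i = 0 then 1 else 0)"
  have t0: "(cmod (e0 i))^2 = (if i = 0 then 1 else 0)" for i unfolding e0_def by simp
  have "nn n e0 = 1" unfolding nn_def t0 using n by (simp add: sum.delta)
  hence Sne: "S \<noteq> {}" unfolding S_def by blast
  have bdd: "bdd_above S"
  proof (rule bdd_aboveI)
    fix x assume "x \<in> S"
    then obtain w where w: "nn n w = 1" "x = Re (bf n h w w)" unfolding S_def by blast
    have "x \<le> cmod (bf n h w w)" using w(2) complex_Re_le_cmod by simp
    also have "\<dots> \<le> K" using bf_bound[of n h w] w(1) unfolding K_def by simp
    finally show "x \<le> K" .
  qed
  define m where "m = Sup S"
  have up1: "Re (bf n h w w) \<le> m" if "nn n w = 1" for w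
    unfolding m_def using that bdd by (intro cSup_upper) (auto simp: S_def)
  have up: "Re (bf n h w w) \<le> m * nn n w" for w
  proof (cases "nn n w = 0")
    case True
    hence "\<forall>i<n. w i = 0" using nn_zero by blast
    hence "bf n h w w = 0" unfolding bf_def by simp
    thus ?thesis using True by simp
  next
    case False
    hence pos: "0 < nn n w" using nn_nonneg[of n w] by simp
    define c where "c = complex_of_real (1 / sqrt (nn n w))"
    have r: "cmod c = 1 / sqrt (nn n w)" unfolding c_def norm_of_real using pos by simp
    have cc: "(cmod c)^2 = 1 / nn n w" unfolding r using pos by (simp add: power_divide)
    have "cnj c * c = complex_of_real (1 / nn n w)" unfolding cnj_mult_self cc ..
    have "nn n (\<lambda>i. c * w i) = 1" unfolding nn_scale cc using pos by simp
    hence "Re (bf n h (\<lambda>i. c * w i) (\<lambda>i. c * w i)) \<le> m" by (rule up1)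
    also have "bf n h (\<lambda>i. c * w i) (\<lambda>i. c * w i) = complex_of_real (1 / nn n w) * bf n h w w"
      unfolding bf_scale \<open>cnj c * c = complex_of_real (1 / nn n w)\<close> ..
    finally have "Re (bf n h w w) / nn n w \<le> m" by simp
    thus ?thesis using pos by (simp add: field_simps)
  qed
  define g where "g = (\<lambda>i j. (if i = j then complex_of_real m else 0) - h i j)"
  have hg: "herm n g" unfolding g_def by (rule herm_shift[OF h])
  have bfg: "Re (bf n g w w) = m * nn n w - Re (bf n h w w)" for w
    unfolding g_def bf_shift by simp
  have psd: "0 \<le> Re (bf n g w w)" for w using up[of w] bfg[of w] by simp
  define Kg where "Kg = (\<Sum>i<n. \<Sum>j<n. cmod (g i j))"
  have Kg0: "0 \<le> Kg" unfolding Kg_def by (simp add: sum_nonneg)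
  have key: "nn n (hv n g w) \<le> Kg * Re (bf n g w w)" for w
  proof -
    define z where "z = hv n g w"
    have "cmod (bf n g w z) = nn n z" unfolding z_def bf_hv_self[OF hg]
      using nn_nonneg by simp
    hence "(nn n z)^2 \<le> Re (bf n g w w) * Re (bf n g z z)" using bf_cs[OF hg psd, of w z] by simp
    also have "\<dots> \<le> Re (bf n g w w) * (Kg * nn n z)"
    proof (intro mult_left_mono psd)
      have "Re (bf n g z z) \<le> cmod (bf n g z z)" by (rule complex_Re_le_cmod)
      also have "\<dots> \<le> Kg * nn n z" unfolding Kg_def by (rule bf_bound)
      finally show "Re (bf n g z z) \<le> Kg * nn n z" .
    qed
    finally have *: "(nn n z)^2 \<le> Re (bf n g w w) * Kg * nn n z" by (simp add: mult.assoc)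
    show ?thesis
    proof (cases "nn n z = 0")
      case True thus ?thesis unfolding z_def[symmetric] using Kg0 psd[of w] by simp
    next
      case False
      hence "0 < nn n z" using nn_nonneg[of n z] by simp
      thus ?thesis using * unfolding z_def[symmetric]
        by (simp add: power2_eq_square mult.commute)
    qed
  qed
  have "\<exists>v. (\<exists>i<n. v i \<noteq> 0) \<and> (\<forall>i<n. hv n g v i = 0)"
  proof (rule ccontr)
    assume "\<not> ?thesis"
    hence inj: "\<And>f. (\<forall>i<n. hv n g f i = 0) \<Longrightarrow> (\<forall>i<n. f i = 0)" by blast
    obtain C where C0: "C \<ge> 0" and C: "\<And>f. nn n f \<le> C * nn n (hv n g f)"
      using inv_bound[OF inj] by blast
    define \<epsilon> where "\<epsilon> = 1 / (C * Kg + 1)"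
    have CK0: "0 \<le> C * Kg" using C0 Kg0 by simp
    have ep: "0 < \<epsilon>" unfolding \<epsilon>_def using CK0 by simp
    have "m - \<epsilon> < Sup S" using ep unfolding m_def by simp
    then obtain x where "x \<in> S" "m - \<epsilon> < x" using less_cSupD[OF Sne] by blast
    then obtain w where w: "nn n w = 1" "m - \<epsilon> < Re (bf n h w w)" unfolding S_def by blast
    have small: "Re (bf n g w w) < \<epsilon>" using bfg[of w] w by simp
    have "1 = nn n w" using w by simp
    also have "\<dots> \<le> C * nn n (hv n g w)" by (rule C)
    also have "\<dots> \<le> C * (Kg * Re (bf n g w w))" by (intro mult_left_mono key C0)
    also have "\<dots> \<le> (C * Kg) * \<epsilon>" using small CK0 by (simp add: mult.assoc[symmetric] mult_left_mono)
    also have "\<dots> < 1" unfolding \<epsilon>_def using CK0 by (simp add: field_simps)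
    finally show False by simp
  qed
  then obtain v where v: "\<exists>i<n. v i \<noteq> 0" "\<forall>i<n. hv n g v i = 0" by blast
  have "\<forall>i<n. hv n h v i = complex_of_real m * v i"
  proof (intro allI impI)
    fix i assume i: "i < n"
    have "hv n g v i = complex_of_real m * v i - hv n h v i"
      unfolding g_def by (rule hv_shift[OF i])
    thus "hv n h v i = complex_of_real m * v i" using v(2) i by simp
  qed
  thus ?thesis using v(1) up by blast
qed

definition hA :: "nat \<Rightarrow> (nat \<times> nat) set \<Rightarrow> nat \<Rightarrow> nat \<Rightarrow> complex" where
  "hA n E i j = herm_adj n E $$ (i,j)"

lemma hA_eq: assumes "i < n" "j < n"
  shows "hA n E i j = (if (i, j) \<in> E \<and> (j, i) \<in> E then 1
      else if (i, j) \<in> E then \<i> else if (j, i) \<in> E then - \<i> else 0)"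
  using assms unfolding hA_def herm_adj_def by simp

lemma hA_vals: assumes "i < n" "j < n" shows "hA n E i j \<in> {0, 1, \<i>, - \<i>}"
  unfolding hA_eq[OF assms] by auto

lemma herm_hA: "herm n (hA n E)"
  unfolding herm_def by (auto simp: hA_eq)

lemma eig_iff_fun: assumes A: "A \<in> carrier_mat n n"
  shows "eigenvalue A k \<longleftrightarrow> (\<exists>f. (\<exists>i<n. f i \<noteq> 0) \<and> (\<forall>i<n. hv n (\<lambda>i j. A $$ (i,j)) f i = k * f i))"
proof
  assume "eigenvalue A k"
  then obtain v where v: "v \<in> carrier_vec n" "v \<noteq> 0\<^sub>v n" "A *\<^sub>v v = k \<cdot>\<^sub>v v"
    unfolding eigenvalue_def eigenvector_def using A by auto
  have "\<exists>i<n. v $ i \<noteq> 0"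
  proof (rule ccontr)
    assume "\<not> ?thesis"
    hence "v = 0\<^sub>v n" using v(1) by (intro eq_vecI) auto
    thus False using v(2) by simp
  qed
  moreover have "\<forall>i<n. hv n (\<lambda>i j. A $$ (i,j)) (($) v) i = k * v $ i"
  proof (intro allI impI)
    fix i assume i: "i < n"
    have "hv n (\<lambda>i j. A $$ (i,j)) (($) v) i = (A *\<^sub>v v) $ i"
      using A v(1) i by (simp add: hv_def scalar_prod_def atLeast0LessThan)
    also have "\<dots> = k * v $ i" using v(3) v(1) i by simp
    finally show "hv n (\<lambda>i j. A $$ (i,j)) (($) v) i = k * v $ i" .
  qed
  ultimately show "\<exists>f. (\<exists>i<n. f i \<noteq> 0) \<and> (\<forall>i<n. hv n (\<lambda>i j. A $$ (i,j)) f i = k * f i)" by blast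
next
  assume "\<exists>f. (\<exists>i<n. f i \<noteq> 0) \<and> (\<forall>i<n. hv n (\<lambda>i j. A $$ (i,j)) f i = k * f i)"
  then obtain f where f: "\<exists>i<n. f i \<noteq> 0" "\<forall>i<n. hv n (\<lambda>i j. A $$ (i,j)) f i = k * f i" by blast
  have "vec n f \<noteq> 0\<^sub>v n"
  proof
    assume "vec n f = 0\<^sub>v n"
    hence "\<forall>i<n. f i = 0" by (metis index_vec index_zero_vec(1))
    thus False using f(1) by blast
  qed
  moreover have "A *\<^sub>v vec n f = k \<cdot>\<^sub>v vec n f"
  proof (rule eq_vecI)
    fix i assume "i < dim_vec (k \<cdot>\<^sub>v vec n f)"
    hence i: "i < n" by simp
    have "(A *\<^sub>v vec n f) $ i = hv n (\<lambda>i j. A $$ (i,j)) f i"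
      using A i by (simp add: hv_def scalar_prod_def atLeast0LessThan)
    thus "(A *\<^sub>v vec n f) $ i = (k \<cdot>\<^sub>v vec n f) $ i" using f(2) i by simp
  qed (use A in simp)
  ultimately show "eigenvalue A k" unfolding eigenvalue_def eigenvector_def using A
    by (intro exI[of _ "vec n f"]) auto
qed

lemma herm_adj_carrier: "herm_adj n E \<in> carrier_mat n n"
  unfolding herm_adj_def by simp

lemma eig_hA: "eigenvalue (herm_adj n E) k \<longleftrightarrow>
   (\<exists>f. (\<exists>i<n. f i \<noteq> 0) \<and> (\<forall>i<n. hv n (hA n E) f i = k * f i))"
  unfolding eig_iff_fun[OF herm_adj_carrier] hA_def[abs_def] ..

lemma finite_real_eig: assumes A: "(A :: complex mat) \<in> carrier_mat n n"
  shows "finite {x :: real. eigenvalue A (complex_of_real x)}"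
proof -
  have cp: "char_poly A \<noteq> 0" using degree_monic_char_poly[OF A] by auto
  have "finite {k. poly (char_poly A) k = 0}" by (rule poly_roots_finite[OF cp])
  hence "finite (complex_of_real -` {k. poly (char_poly A) k = 0})"
    by (rule finite_vimageI) (simp add: inj_def)
  moreover have "{x :: real. eigenvalue A (complex_of_real x)} = complex_of_real -` {k. poly (char_poly A) k = 0}"
    using eigenvalue_root_char_poly[OF A] by auto
  ultimately show ?thesis by simp
qed

lemma bf_eig: assumes "\<forall>i<n. hv n h f i = complex_of_real x * f i"
  shows "Re (bf n h f f) = x * nn n f"
proof -
  have "bf n h f f = (\<Sum>i<n. complex_of_real x * (cnj (f i) * f i))"
    unfolding bf_hv using assms by (intro sum.cong refl) (simp add: algebra_simps)
  also have "\<dots> = complex_of_real x * complex_of_real (nn n f)"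
    by (simp add: sum_distrib_left[symmetric] sum_cnj_self)
  finally show ?thesis by simp
qed

lemma nn_pos: assumes "\<exists>i<n. f i \<noteq> 0" shows "0 < nn n f"
  using assms nn_zero nn_nonneg[of n f] by force

lemma bf_e0: assumes "0 < n"
  shows "bf n h (\<lambda>i. if i = 0 then 1 else 0) (\<lambda>i. if i = 0 then 1 else 0) = h 0 0"
proof -
  have t: "cnj (if i = 0 then 1 else 0) * h i j * (if j = 0 then 1 else 0)
      = (if j = 0 then (if i = 0 then h 0 0 else 0) else 0)" for i j :: nat
    by simp
  show ?thesis unfolding bf_def t using assms by (simp add: sum.delta)
qed

lemma nn_e0: assumes "0 < n" shows "nn n (\<lambda>i. if i = 0 then 1 else 0) = 1"
proof -
  have t: "(cmod (if i = 0 then 1 else 0))^2 = (if i = 0 then 1 else (0::real))" for i :: nat by simp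
  show ?thesis unfolding nn_def t using assms by (simp add: sum.delta)
qed

lemma lambda1_facts:
  assumes dg: "digraph n E" and n: "1 \<le> n"
  shows "eigenvalue (herm_adj n E) (complex_of_real (lambda1 n E))"
    "\<And>x. eigenvalue (herm_adj n E) (complex_of_real x) \<Longrightarrow> x \<le> lambda1 n E"
    "\<And>w. Re (bf n (hA n E) w w) \<le> lambda1 n E * nn n w"
    "0 \<le> lambda1 n E"
    "finite {x::real. eigenvalue (herm_adj n E) (complex_of_real x)}"
proof -
  obtain m v where v: "\<exists>i<n. v i \<noteq> 0" "\<forall>i<n. hv n (hA n E) v i = complex_of_real m * v i"
     and up: "\<And>w. Re (bf n (hA n E) w w) \<le> m * nn n w"
    using rayleigh[OF herm_hA n] by blast
  define S where "S = {x::real. eigenvalue (herm_adj n E) (complex_of_real x)}"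
  have fin: "finite S" unfolding S_def by (rule finite_real_eig[OF herm_adj_carrier])
  have mS: "m \<in> S" unfolding S_def eig_hA using v by blast
  have le: "x \<le> m" if xS: "x \<in> S" for x
  proof -
    obtain f where f: "\<exists>i<n. f i \<noteq> 0" "\<forall>i<n. hv n (hA n E) f i = complex_of_real x * f i"
      using xS unfolding S_def eig_hA by blast
    have "x * nn n f \<le> m * nn n f" using up[of f] bf_eig[OF f(2)] by simp
    thus "x \<le> m" using nn_pos[OF f(1)] by simp
  qed
  have lm: "lambda1 n E = m" unfolding lambda1_def S_def[symmetric]
    using fin mS le by (intro Max_eqI) auto
  show "eigenvalue (herm_adj n E) (complex_of_real (lambda1 n E))" using mS unfolding lm S_def by simp
  show "\<And>x. eigenvalue (herm_adj n E) (complex_of_real x) \<Longrightarrow> x \<le> lambda1 n E"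
    using le unfolding lm S_def by simp
  show "\<And>w. Re (bf n (hA n E) w w) \<le> lambda1 n E * nn n w" using up unfolding lm .
  have n0: "0 < n" using n by simp
  have "hA n E 0 0 = 0" using dg n0 unfolding digraph_def by (simp add: hA_eq)
  hence "Re (bf n (hA n E) (\<lambda>i. if i = 0 then 1 else 0) (\<lambda>i. if i = 0 then 1 else 0)) = 0"
    using bf_e0[OF n0] by simp
  thus "0 \<le> lambda1 n E" using up[of "\<lambda>i. if i = 0 then 1 else 0"] nn_e0[OF n0] unfolding lm by simp
  show "finite {x::real. eigenvalue (herm_adj n E) (complex_of_real x)}" using fin unfolding S_def .
qed

lemma rho_facts:
  assumes dg: "digraph n E" and n: "1 \<le> n"
  shows "\<exists>x0. eigenvalue (herm_adj n E) (complex_of_real x0) \<and> rho n E = \<bar>x0\<bar>"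
    "\<And>x. eigenvalue (herm_adj n E) (complex_of_real x) \<Longrightarrow> \<bar>x\<bar> \<le> rho n E"
proof -
  define S where "S = {x::real. eigenvalue (herm_adj n E) (complex_of_real x)}"
  have fin: "finite S" unfolding S_def by (rule lambda1_facts(5)[OF dg n])
  have ne: "lambda1 n E \<in> S" unfolding S_def using lambda1_facts(1)[OF dg n] by simp
  have R: "{\<bar>x\<bar> | x :: real. eigenvalue (herm_adj n E) (complex_of_real x)} = abs ` S"
    unfolding S_def by auto
  have rr: "rho n E = Max (abs ` S)" unfolding rho_def R ..
  have "rho n E \<in> abs ` S" unfolding rr using fin ne by (intro Max_in) auto
  thus "\<exists>x0. eigenvalue (herm_adj n E) (complex_of_real x0) \<and> rho n E = \<bar>x0\<bar>"
    unfolding S_def by auto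
  show "\<And>x. eigenvalue (herm_adj n E) (complex_of_real x) \<Longrightarrow> \<bar>x\<bar> \<le> rho n E"
    unfolding rr using fin by (intro Max_ge) (auto simp: S_def)
qed

lemma term_ineq: assumes "c \<in> {0, 1, \<i>, - \<i>}"
  shows "0 \<le> 2 * Re (complex_of_real (cmod a) * c * complex_of_real (cmod b))
             + Re (a * c * cnj b) + Re (cnj a * c * b)"
proof -
  consider "c = 0" | "c = 1" | "c = \<i>" | "c = - \<i>" using assms by auto
  thus ?thesis
  proof cases
    case 2
    have e: "Re (cnj a * b) = Re (a * cnj b)" by simp
    have "\<bar>Re (a * cnj b)\<bar> \<le> cmod (a * cnj b)" by (rule abs_Re_le_cmod)
    also have "\<dots> = cmod a * cmod b" by (simp add: norm_mult)
    finally show ?thesis using 2 e by simp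
  qed (simp_all add: algebra_simps)
qed

lemma rho_le:
  assumes dg: "digraph n E" and n: "1 \<le> n"
  shows "rho n E \<le> 3 * lambda1 n E"
proof -
  obtain x0 where x0: "eigenvalue (herm_adj n E) (complex_of_real x0)" "rho n E = \<bar>x0\<bar>"
    using rho_facts(1)[OF dg n] by blast
  note L = lambda1_facts[OF dg n]
  show ?thesis
  proof (cases "0 \<le> x0")
    case True thus ?thesis using x0 L(2)[OF x0(1)] L(4) by simp
  next
    case False
    define h where "h = hA n E"
    define m where "m = lambda1 n E"
    obtain f where f: "\<exists>i<n. f i \<noteq> 0" "\<forall>i<n. hv n h f i = complex_of_real x0 * f i"
      using x0(1) unfolding eig_hA h_def by blast
    define f1 where "f1 = (\<lambda>i. complex_of_real (cmod (f i)))"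
    define f2 where "f2 = (\<lambda>i. cnj (f i))"
    have nn1: "nn n f1 = nn n f" unfolding nn_def f1_def by simp
    have nn2: "nn n f2 = nn n f" unfolding nn_def f2_def by simp
    have "2 * Re (bf n h f1 f1) + Re (bf n h f2 f2) + Re (bf n h f f)
        = (\<Sum>i<n. \<Sum>j<n. 2 * Re (complex_of_real (cmod (f i)) * h i j * complex_of_real (cmod (f j)))
             + Re (f i * h i j * cnj (f j)) + Re (cnj (f i) * h i j * f j))"
      unfolding bf_def f1_def f2_def by (simp add: Re_sum sum.distrib sum_distrib_left)
    also have "\<dots> \<ge> 0"
    proof (intro sum_nonneg term_ineq)
      fix i j assume "i \<in> {..<n}" "j \<in> {..<n}"
      thus "h i j \<in> {0, 1, \<i>, - \<i>}" unfolding h_def by (intro hA_vals) auto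
    qed
    finally have s: "0 \<le> 2 * Re (bf n h f1 f1) + Re (bf n h f2 f2) + Re (bf n h f f)" .
    have b1: "Re (bf n h f1 f1) \<le> m * nn n f" using L(3)[of f1] nn1 unfolding h_def m_def by simp
    have b2: "Re (bf n h f2 f2) \<le> m * nn n f" using L(3)[of f2] nn2 unfolding h_def m_def by simp
    have b3: "Re (bf n h f f) = x0 * nn n f" by (rule bf_eig[OF f(2)])
    have "0 \<le> (3 * m + x0) * nn n f" using s b1 b2 b3 by (simp add: algebra_simps)
    hence "0 \<le> 3 * m + x0" using nn_pos[OF f(1)] by (simp add: zero_le_mult_iff)
    thus ?thesis using x0(2) False unfolding m_def by simp
  qed
qed

lemma lambda1_le_rho:
  assumes dg: "digraph n E" and n: "1 \<le> n"
  shows "lambda1 n E \<le> rho n E"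
  using rho_facts(2)[OF dg n lambda1_facts(1)[OF dg n]] by simp

lemma sum2: "(\<Sum>j<(2::nat). g j) = g 0 + (g 1 :: complex)"
  by (simp add: eval_nat_numeral)
lemma sum4: "(\<Sum>j<(4::nat). g j) = g 0 + g 1 + g 2 + (g 3 :: complex)"
  by (simp add: eval_nat_numeral)

definition E1 :: "(nat \<times> nat) set" where "E1 = {(0,1),(1,0)}"
definition E2 :: "(nat \<times> nat) set" where
  "E2 = {(0,1),(1,2),(2,3),(3,0),(0,2),(2,0),(1,3),(3,1)}"

lemma dg1: "digraph 2 E1" unfolding digraph_def E1_def by auto
lemma dg2: "digraph 4 E2" unfolding digraph_def E2_def by auto

lemma hv1: "hv 2 (hA 2 E1) f 0 = f 1" "hv 2 (hA 2 E1) f 1 = f 0"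
  unfolding hv_def sum2 by (simp_all add: hA_eq E1_def)

lemma hv2:
  "hv 4 (hA 4 E2) f 0 = \<i> * f 1 + f 2 - \<i> * f 3"
  "hv 4 (hA 4 E2) f 1 = - \<i> * f 0 + \<i> * f 2 + f 3"
  "hv 4 (hA 4 E2) f 2 = f 0 - \<i> * f 1 + \<i> * f 3"
  "hv 4 (hA 4 E2) f 3 = \<i> * f 0 + f 1 - \<i> * f 2"
  unfolding hv_def sum4 by (simp_all add: hA_eq E2_def)

lemma eig1: assumes "eigenvalue (herm_adj 2 E1) (complex_of_real x)" shows "\<bar>x\<bar> = 1"
proof -
  obtain f where f: "\<exists>i<2. f i \<noteq> 0" "\<forall>i<2. hv 2 (hA 2 E1) f i = complex_of_real x * f i"
    using assms unfolding eig_hA by blast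
  have a: "f 1 = complex_of_real x * f 0" using f(2)[rule_format, of 0] hv1 by simp
  have b: "f 0 = complex_of_real x * f 1" using f(2)[rule_format, of 1] hv1 by simp
  have "f 0 = complex_of_real (x^2) * f 0" using a b by (simp add: power2_eq_square)
  moreover have "f 1 = complex_of_real (x^2) * f 1" using a b by (simp add: power2_eq_square)
  moreover have "f 0 \<noteq> 0 \<or> f 1 \<noteq> 0"
  proof -
    obtain i where i: "i < 2" "f i \<noteq> 0" using f(1) by blast
    hence "i = 0 \<or> i = 1" by auto
    thus ?thesis using i by auto
  qed
  ultimately have "complex_of_real (x^2) = 1" by (metis mult_cancel_right2)
  hence "x^2 = 1" by (metis of_real_eq_1_iff)
  thus ?thesis by (auto simp: power2_eq_1_iff)
qed

lemma eig2: assumes "eigenvalue (herm_adj 4 E2) (complex_of_real x)" shows "x = 1 \<or> x = -3"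
proof -
  obtain f where f: "\<exists>i<4. f i \<noteq> 0" "\<forall>i<4. hv 4 (hA 4 E2) f i = complex_of_real x * f i"
    using assms unfolding eig_hA by blast
  define y where "y = complex_of_real x"
  define s where "s = f 0 - \<i> * f 1 - f 2 + \<i> * f 3"
  have r0: "hv 4 (hA 4 E2) f 0 = y * f 0" using f(2) unfolding y_def by auto
  have r1: "hv 4 (hA 4 E2) f 1 = y * f 1" using f(2) unfolding y_def by auto
  have r2: "hv 4 (hA 4 E2) f 2 = y * f 2" using f(2) unfolding y_def by auto
  have r3: "hv 4 (hA 4 E2) f 3 = y * f 3" using f(2) unfolding y_def by auto
  have q0: "\<i> * f 1 + f 2 - \<i> * f 3 = y * f 0" using r0 unfolding hv2(1) .
  have q1: "- \<i> * f 0 + \<i> * f 2 + f 3 = y * f 1" using r1 unfolding hv2(2) .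
  have q2: "f 0 - \<i> * f 1 + \<i> * f 3 = y * f 2" using r2 unfolding hv2(3) .
  have q3: "\<i> * f 0 + f 1 - \<i> * f 2 = y * f 3" using r3 unfolding hv2(4) .
  have e0: "y * f 0 = f 0 - s" unfolding q0[symmetric] s_def by (simp add: algebra_simps)
  have e1: "y * f 1 = f 1 - \<i> * s" unfolding q1[symmetric] s_def by (simp add: algebra_simps)
  have e2: "y * f 2 = f 2 + s" unfolding q2[symmetric] s_def by (simp add: algebra_simps)
  have e3: "y * f 3 = f 3 + \<i> * s" unfolding q3[symmetric] s_def by (simp add: algebra_simps)
  have "(y + 3) * s = y * f 0 - \<i> * (y * f 1) - y * f 2 + \<i> * (y * f 3) + 3 * s"
    unfolding s_def by (simp add: algebra_simps)
  also have "\<dots> = 0" unfolding e0 e1 e2 e3 unfolding s_def by (simp add: algebra_simps)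
  finally have ys: "(y + 3) * s = 0" .
  show ?thesis
  proof (cases "s = 0")
    case True
    have "(y - 1) * f i = 0" if "i < 4" for i
    proof -
      have "i = 0 \<or> i = 1 \<or> i = 2 \<or> i = 3" using that by auto
      thus ?thesis using e0 e1 e2 e3 True by (auto simp: algebra_simps)
    qed
    hence "y = 1" using f(1) by auto
    thus ?thesis unfolding y_def by (metis of_real_eq_1_iff)
  next
    case False
    hence "y + 3 = 0" using ys by simp
    moreover have "y = (y + 3) - 3" by simp
    ultimately have "y = -3" by simp
    hence "complex_of_real x = complex_of_real (-3)" unfolding y_def by simp
    thus ?thesis by (metis of_real_eq_iff)
  qed
qed

lemma eig2_m3: "eigenvalue (herm_adj 4 E2) (complex_of_real (-3))"
proof -
  define f :: "nat \<Rightarrow> complex" where "f = (\<lambda>i. if i = 0 then 1 else if i = 1 then \<i> else if i = 2 then -1 else - \<i>)"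
  have a: "\<exists>i<4. f i \<noteq> 0" by (intro exI[of _ 0]) (simp add: f_def)
  have b: "\<forall>i<4. hv 4 (hA 4 E2) f i = complex_of_real (-3) * f i"
  proof (intro allI impI)
    fix i :: nat assume "i < 4"
    hence "i = 0 \<or> i = 1 \<or> i = 2 \<or> i = 3" by auto
    thus "hv 4 (hA 4 E2) f i = complex_of_real (-3) * f i"
    proof (elim disjE)
      assume "i = 0" thus ?thesis unfolding hv2(1) \<open>i = 0\<close> by (simp add: f_def)
    next
      assume "i = 1" thus ?thesis unfolding hv2(2) \<open>i = 1\<close> by (simp add: f_def)
    next
      assume "i = 2" thus ?thesis unfolding hv2(3) \<open>i = 2\<close> by (simp add: f_def)
    next
      assume "i = 3" thus ?thesis unfolding hv2(4) \<open>i = 3\<close> by (simp add: f_def)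
    qed
  qed
  show ?thesis unfolding eig_hA using a b by blast
qed

lemma ex1: "lambda1 2 E1 = rho 2 E1"
proof -
  have l: "\<bar>lambda1 2 E1\<bar> = 1" by (rule eig1[OF lambda1_facts(1)[OF dg1]]) simp
  have l1: "lambda1 2 E1 = 1" using l lambda1_facts(4)[OF dg1] by simp
  obtain x0 where "eigenvalue (herm_adj 2 E1) (complex_of_real x0)" "rho 2 E1 = \<bar>x0\<bar>"
    using rho_facts(1)[OF dg1] by auto
  hence "rho 2 E1 = 1" using eig1 by simp
  thus ?thesis using l1 by simp
qed

lemma ex2: "rho 4 E2 = 3 * lambda1 4 E2"
proof -
  have "lambda1 4 E2 = 1 \<or> lambda1 4 E2 = -3" by (rule eig2[OF lambda1_facts(1)[OF dg2]]) simp
  hence l1: "lambda1 4 E2 = 1" using lambda1_facts(4)[OF dg2] by auto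
  obtain x0 where x0: "eigenvalue (herm_adj 4 E2) (complex_of_real x0)" "rho 4 E2 = \<bar>x0\<bar>"
    using rho_facts(1)[OF dg2] by auto
  have "x0 = 1 \<or> x0 = -3" by (rule eig2[OF x0(1)])
  hence "rho 4 E2 \<le> 3" using x0(2) by auto
  moreover have "\<bar>-3::real\<bar> \<le> rho 4 E2" by (rule rho_facts(2)[OF dg2 _ eig2_m3]) simp
  ultimately have "rho 4 E2 = 3" by simp
  thus ?thesis using l1 by simp
qed

theorem theorem5p6:
  shows "(\<forall>n E. digraph n E \<and> n \<ge> 1 \<longrightarrow>
            lambda1 n E \<le> rho n E \<and> rho n E \<le> 3 * lambda1 n E)
       \<and> (\<exists>n E. digraph n E \<and> E \<noteq> {} \<and> lambda1 n E = rho n E)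
       \<and> (\<exists>n E. digraph n E \<and> E \<noteq> {} \<and> rho n E = 3 * lambda1 n E)"
proof -
  have P1: "\<forall>n E. digraph n E \<and> n \<ge> 1 \<longrightarrow>
            lambda1 n E \<le> rho n E \<and> rho n E \<le> 3 * lambda1 n E"
    using lambda1_le_rho rho_le by blast
  have P2: "\<exists>n E. digraph n E \<and> E \<noteq> {} \<and> lambda1 n E = rho n E"
    using dg1 ex1 by (intro exI[of _ 2] exI[of _ E1]) (auto simp: E1_def)
  have P3: "\<exists>n E. digraph n E \<and> E \<noteq> {} \<and> rho n E = 3 * lambda1 n E"
    using dg2 ex2 by (intro exI[of _ 4] exI[of _ E2]) (auto simp: E2_def)
  show ?thesis using P1 P2 P3 by blast
qed

end
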